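(* Let $i\le k$ be positive integers and let $\rho$ be an $i$-polymatroid on $E$ that is an excluded minor for $\mathcal{D}_k$. Then for each $j$ with $i\le j\le k$, the $j$-dual of $\rho$ is an excluded minor for $\mathcal{D}_k$, and so is the $j$-polymatroid $\rho^j$ defined by $\rho^j(X)=\rho(X)+(j-i)|X|$ for $X\subseteq E$.
   Context: A polymatroid on $E$ is a function $\rho:2^E\to\mathbb{Z}$ that is normalized, non-decreasing and submodular; it is an $i$-polymatroid if $\rho(\{e\})\le i$ for all $e$. Any $i$-polymatroid is a $j$-polymatroid for $j\ge i$; its $j$-dual is $X\mapsto j|X|-\rho(E)+\rho(E-X)$. $\mathcal{D}_k$ is the class of polymatroids expressible as $r_{M_1}+\cdots+r_{M_k}$ for matroids $M_1,\dots,M_k$ on the ground set. Deletion and contraction: $\rho_{\backslash A}(X)=\rho(X)$, $\rho_{/A}(X)=\rho(X\cup A)-\rho(A)$ for $X\subseteq E-A$; minors are $(\rho_{\backslash A})_{/B}$ with $A,B$ disjoint, proper if $A\cup B\ne\emptyset$. An excluded minor for $\mathcal{D}_k$ is a polymatroid not in $\mathcal{D}_k$ all of whose proper minors are in $\mathcal{D}_k$. *)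

theory Defs
  imports Main
begin

text \<open>Set functions on a finite ground set E; only values on subsets of E matter.\<close>

definition polymatroid :: "'a set \<Rightarrow> ('a set \<Rightarrow> int) \<Rightarrow> bool" where
  "polymatroid E \<rho> \<longleftrightarrow>
     \<rho> {} = 0 \<and>
     (\<forall>X Y. X \<subseteq> Y \<and> Y \<subseteq> E \<longrightarrow> \<rho> X \<le> \<rho> Y) \<and>
     (\<forall>X Y. X \<subseteq> E \<and> Y \<subseteq> E \<longrightarrow> \<rho> (X \<union> Y) + \<rho> (X \<inter> Y) \<le> \<rho> X + \<rho> Y)"

definition ipolymatroid :: "nat \<Rightarrow> 'a set \<Rightarrow> ('a set \<Rightarrow> int) \<Rightarrow> bool" where
  "ipolymatroid i E \<rho> \<longleftrightarrow> polymatroid E \<rho> \<and> (\<forall>e\<in>E. \<rho> {e} \<le> int i)"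

definition matroid_rank :: "'a set \<Rightarrow> ('a set \<Rightarrow> int) \<Rightarrow> bool" where
  "matroid_rank E r \<longleftrightarrow>
     (\<forall>X. X \<subseteq> E \<longrightarrow> 0 \<le> r X \<and> r X \<le> int (card X)) \<and>
     (\<forall>X Y. X \<subseteq> Y \<and> Y \<subseteq> E \<longrightarrow> r X \<le> r Y) \<and>
     (\<forall>X Y. X \<subseteq> E \<and> Y \<subseteq> E \<longrightarrow> r (X \<union> Y) + r (X \<inter> Y) \<le> r X + r Y)"

definition in_Dk :: "nat \<Rightarrow> 'a set \<Rightarrow> ('a set \<Rightarrow> int) \<Rightarrow> bool" where
  "in_Dk k E \<rho> \<longleftrightarrow> polymatroid E \<rho> \<and>
     (\<exists>r :: nat \<Rightarrow> 'a set \<Rightarrow> int. (\<forall>l<k. matroid_rank E (r l)) \<and>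
        (\<forall>X. X \<subseteq> E \<longrightarrow> \<rho> X = (\<Sum>l<k. r l X)))"

definition jdual :: "nat \<Rightarrow> 'a set \<Rightarrow> ('a set \<Rightarrow> int) \<Rightarrow> 'a set \<Rightarrow> int" where
  "jdual j E \<rho> = (\<lambda>X. int j * int (card X) - \<rho> E + \<rho> (E - X))"

text \<open>Deletion of A (ground set becomes E - A) and contraction of A (ground set E - A).\<close>
definition pdelete :: "('a set \<Rightarrow> int) \<Rightarrow> 'a set \<Rightarrow> 'a set \<Rightarrow> int" where
  "pdelete \<rho> A = (\<lambda>X. \<rho> X)"

definition pcontract :: "('a set \<Rightarrow> int) \<Rightarrow> 'a set \<Rightarrow> 'a set \<Rightarrow> int" where
  "pcontract \<rho> A = (\<lambda>X. \<rho> (X \<union> A) - \<rho> A)"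

definition excluded_minor_Dk :: "nat \<Rightarrow> 'a set \<Rightarrow> ('a set \<Rightarrow> int) \<Rightarrow> bool" where
  "excluded_minor_Dk k E \<rho> \<longleftrightarrow> polymatroid E \<rho> \<and> \<not> in_Dk k E \<rho> \<and>
     (\<forall>A B. A \<subseteq> E \<and> B \<subseteq> E \<and> A \<inter> B = {} \<and> A \<union> B \<noteq> {} \<longrightarrow>
        in_Dk k (E - A - B) (pcontract (pdelete \<rho> A) B))"

end

theory Submission
  imports Defs
begin

lemma card_Un_Int_int:
  assumes "finite A" "finite B"
  shows "int (card (A \<union> B)) + int (card (A \<inter> B)) = int (card A) + int (card B)"
  using card_Un_Int[OF assms] by linarith


lemma mr_nonneg: "matroid_rank E r \<Longrightarrow> X \<subseteq> E \<Longrightarrow> 0 \<le> r X"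
  unfolding matroid_rank_def by simp
lemma mr_card: "matroid_rank E r \<Longrightarrow> X \<subseteq> E \<Longrightarrow> r X \<le> int (card X)"
  unfolding matroid_rank_def by simp
lemma mr_mono: "matroid_rank E r \<Longrightarrow> X \<subseteq> Y \<Longrightarrow> Y \<subseteq> E \<Longrightarrow> r X \<le> r Y"
  unfolding matroid_rank_def by simp
lemma mr_sub: "matroid_rank E r \<Longrightarrow> X \<subseteq> E \<Longrightarrow> Y \<subseteq> E \<Longrightarrow> r (X \<union> Y) + r (X \<inter> Y) \<le> r X + r Y"
  unfolding matroid_rank_def by simp
lemma pm_empty: "polymatroid E \<rho> \<Longrightarrow> \<rho> {} = 0"
  unfolding polymatroid_def by simp
lemma pm_mono: "polymatroid E \<rho> \<Longrightarrow> X \<subseteq> Y \<Longrightarrow> Y \<subseteq> E \<Longrightarrow> \<rho> X \<le> \<rho> Y"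
  unfolding polymatroid_def by simp
lemma pm_sub: "polymatroid E \<rho> \<Longrightarrow> X \<subseteq> E \<Longrightarrow> Y \<subseteq> E \<Longrightarrow> \<rho> (X \<union> Y) + \<rho> (X \<inter> Y) \<le> \<rho> X + \<rho> Y"
  unfolding polymatroid_def by simp
lemma pm_nonneg: "polymatroid E \<rho> \<Longrightarrow> X \<subseteq> E \<Longrightarrow> 0 \<le> \<rho> X"
  using pm_mono[of E \<rho> "{}" X] pm_empty[of E \<rho>] by simp

lemma matroid_rank_empty: "matroid_rank E r \<Longrightarrow> r {} = 0"
  unfolding matroid_rank_def by (metis card.empty empty_subsetI of_nat_0 order_antisym)

lemma matroid_unit:
  assumes "matroid_rank E r" "X \<subseteq> Y" "Y \<subseteq> E" "finite E"
  shows "r Y \<le> r X + int (card (Y - X))"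
proof -
  have s: "X \<subseteq> E" "Y - X \<subseteq> E" using assms by auto
  have "r (X \<union> (Y - X)) + r (X \<inter> (Y - X)) \<le> r X + r (Y - X)"
    using mr_sub[OF assms(1) s] .
  moreover have "X \<union> (Y - X) = Y" using assms by auto
  moreover have "X \<inter> (Y - X) = {}" by auto
  moreover have "r (Y - X) \<le> int (card (Y - X))" using mr_card[OF assms(1) s(2)] .
  ultimately show ?thesis using matroid_rank_empty[OF assms(1)] by simp
qed

lemma matroid_dual:
  assumes "matroid_rank E r" "finite E"
  shows "matroid_rank E (\<lambda>X. int (card X) - r E + r (E - X))"
  unfolding matroid_rank_def
proof (intro conjI allI impI)
  fix X assume X: "X \<subseteq> E"
  have "r E \<le> r (E - X) + int (card (E - (E - X)))"
    using matroid_unit[OF assms(1) _ _ assms(2), of "E - X" E] by auto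
  moreover have "E - (E - X) = X" using X by auto
  ultimately show "0 \<le> int (card X) - r E + r (E - X)" by simp
  have "r (E - X) \<le> r E" using mr_mono[OF assms(1)] by auto
  then show "int (card X) - r E + r (E - X) \<le> int (card X)" by simp
next
  fix X Y assume XY: "X \<subseteq> Y \<and> Y \<subseteq> E"
  have "r (E - X) \<le> r (E - Y) + int (card ((E - X) - (E - Y)))"
    using matroid_unit[OF assms(1) _ _ assms(2), of "E - Y" "E - X"] XY by auto
  moreover have "(E - X) - (E - Y) = Y - X" using XY by auto
  moreover have "card (Y - X) = card Y - card X" using XY assms(2) by (meson card_Diff_subset finite_subset)
  moreover have "card X \<le> card Y" using XY assms(2) by (meson card_mono finite_subset)
  ultimately show "int (card X) - r E + r (E - X) \<le> int (card Y) - r E + r (E - Y)" by simp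
next
  fix X Y assume XY: "X \<subseteq> E \<and> Y \<subseteq> E"
  have fin: "finite X" "finite Y" using XY assms(2) finite_subset by auto
  have "r ((E - X) \<union> (E - Y)) + r ((E - X) \<inter> (E - Y)) \<le> r (E - X) + r (E - Y)"
    using mr_sub[OF assms(1), of "E - X" "E - Y"] by auto
  moreover have "(E - X) \<union> (E - Y) = E - (X \<inter> Y)" "(E - X) \<inter> (E - Y) = E - (X \<union> Y)" by auto
  ultimately show "int (card (X \<union> Y)) - r E + r (E - (X \<union> Y)) + (int (card (X \<inter> Y)) - r E + r (E - X \<inter> Y))
         \<le> int (card X) - r E + r (E - X) + (int (card Y) - r E + r (E - Y))"
    using card_Un_Int_int[OF fin] by simp
qed

lemma in_Dk_intro:
  assumes r: "\<forall>l<k. matroid_rank E (r l)" and s: "\<forall>X. X \<subseteq> E \<longrightarrow> \<sigma> X = (\<Sum>l<k. r l X)"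
  shows "in_Dk k E \<sigma>"
proof -
  have "polymatroid E \<sigma>"
    unfolding polymatroid_def
  proof (intro conjI allI impI)
    have "\<sigma> {} = (\<Sum>l<k. r l {})" using s by simp
    also have "\<dots> = 0" by (rule sum.neutral) (use r matroid_rank_empty in auto)
    finally show "\<sigma> {} = 0" .
  next
    fix X Y assume a: "X \<subseteq> Y \<and> Y \<subseteq> E"
    have "(\<Sum>l<k. r l X) \<le> (\<Sum>l<k. r l Y)"
      using r a by (intro sum_mono) (auto simp: matroid_rank_def)
    then show "\<sigma> X \<le> \<sigma> Y" using s a by auto
  next
    fix X Y assume a: "X \<subseteq> E \<and> Y \<subseteq> E"
    have "(\<Sum>l<k. r l (X \<union> Y) + r l (X \<inter> Y)) \<le> (\<Sum>l<k. r l X + r l Y)"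
      using r a by (intro sum_mono) (auto simp: matroid_rank_def)
    then show "\<sigma> (X \<union> Y) + \<sigma> (X \<inter> Y) \<le> \<sigma> X + \<sigma> Y"
      using s a by (simp add: sum.distrib Un_subset_iff le_infI1)
  qed
  then show ?thesis unfolding in_Dk_def using r s by blast
qed

lemma in_Dk_cong:
  assumes "in_Dk k E f" "\<forall>X. X \<subseteq> E \<longrightarrow> f X = g X"
  shows "in_Dk k E g"
proof -
  obtain r where r: "\<forall>l<k. matroid_rank E (r l)" "\<forall>X. X \<subseteq> E \<longrightarrow> f X = (\<Sum>l<k. r l X)"
    using assms(1) unfolding in_Dk_def by blast
  show ?thesis by (rule in_Dk_intro[where r = r]) (use r assms(2) in auto)
qed

lemma Dk_kdual:
  assumes "in_Dk k E \<sigma>" "finite E"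
  shows "in_Dk k E (jdual k E \<sigma>)"
proof -
  obtain r where r: "\<forall>l<k. matroid_rank E (r l)" "\<forall>X. X \<subseteq> E \<longrightarrow> \<sigma> X = (\<Sum>l<k. r l X)"
    using assms(1) unfolding in_Dk_def by blast
  show ?thesis
  proof (rule in_Dk_intro[where r = "\<lambda>l X. int (card X) - r l E + r l (E - X)"])
    show "\<forall>l<k. matroid_rank E (\<lambda>X. int (card X) - r l E + r l (E - X))"
      using r(1) matroid_dual assms(2) by blast
    show "\<forall>X. X \<subseteq> E \<longrightarrow> jdual k E \<sigma> X = (\<Sum>l<k. int (card X) - r l E + r l (E - X))"
      using r(2) by (auto simp: jdual_def sum.distrib sum_subtractf)
  qed
qed


lemma loops_aux:
  assumes "matroid_rank E r" "finite W" "W \<subseteq> C" "C \<subseteq> E" "\<forall>c\<in>C. r {c} = 0" "Z \<subseteq> E"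
  shows "r (Z \<union> W) \<le> r Z"
  using assms(2,3)
proof (induction W rule: finite_induct)
  case empty then show ?case by simp
next
  case (insert w W)
  have sub: "Z \<union> W \<subseteq> E" "{w} \<subseteq> E" "(Z \<union> W) \<inter> {w} \<subseteq> E" using insert assms by auto
  have "r ((Z \<union> W) \<union> {w}) + r ((Z \<union> W) \<inter> {w}) \<le> r (Z \<union> W) + r {w}"
    using mr_sub[OF assms(1) sub(1,2)] .
  moreover have "0 \<le> r ((Z \<union> W) \<inter> {w})" using mr_nonneg[OF assms(1) sub(3)] .
  moreover have "r {w} = 0" using insert assms by auto
  moreover have "Z \<union> insert w W = (Z \<union> W) \<union> {w}" by auto
  ultimately show ?case using insert by auto
qed

lemma loops_rank:
  assumes "matroid_rank E r" "finite E" "C \<subseteq> E" "\<forall>c\<in>C. r {c} = 0" "X \<subseteq> E"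
  shows "r X = r (X - C)"
proof -
  have "r ((X - C) \<union> (X \<inter> C)) \<le> r (X - C)"
    using assms by (intro loops_aux[where C = C and E = E]) (auto intro: finite_subset)
  moreover have "(X - C) \<union> (X \<inter> C) = X" by auto
  moreover have "r (X - C) \<le> r X" using mr_mono[OF assms(1) _ assms(5)] by auto
  ultimately show ?thesis by simp
qed

lemma matroid_add_coloops:
  assumes "matroid_rank E r" "finite E" "C \<subseteq> E" "\<forall>c\<in>C. r {c} = 0"
  shows "matroid_rank E (\<lambda>X. r X + int (card (X \<inter> C)))"
  unfolding matroid_rank_def
proof (intro conjI allI impI)
  fix X assume X: "X \<subseteq> E"
  have fX: "finite X" using X assms(2) finite_subset by auto
  show "0 \<le> r X + int (card (X \<inter> C))" using mr_nonneg[OF assms(1) X] by simp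
  have "r X = r (X - C)" using loops_rank assms X by blast
  moreover have "X - C \<subseteq> E" using X by auto
  then have "r (X - C) \<le> int (card (X - C))" using mr_card[OF assms(1)] by blast
  moreover have "card X = card (X \<inter> C) + card (X - C)" using card_Int_Diff[OF fX] by blast
  ultimately show "r X + int (card (X \<inter> C)) \<le> int (card X)" by simp
next
  fix X Y assume XY: "X \<subseteq> Y \<and> Y \<subseteq> E"
  have "r X \<le> r Y" using mr_mono[OF assms(1)] mr_sub[OF assms(1)] XY by auto
  moreover have "card (X \<inter> C) \<le> card (Y \<inter> C)" using XY assms(2,3)
    by (meson card_mono finite_subset inf_le2 Int_mono order_refl)
  ultimately show "r X + int (card (X \<inter> C)) \<le> r Y + int (card (Y \<inter> C))" by simp
next
  fix X Y assume XY: "X \<subseteq> E \<and> Y \<subseteq> E"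
  have fin: "finite (X \<inter> C)" "finite (Y \<inter> C)" using assms(2,3) finite_subset by auto
  have "r (X \<union> Y) + r (X \<inter> Y) \<le> r X + r Y" using mr_mono[OF assms(1)] mr_sub[OF assms(1)] XY by auto
  moreover have "(X \<union> Y) \<inter> C = (X \<inter> C) \<union> (Y \<inter> C)" "(X \<inter> Y) \<inter> C = (X \<inter> C) \<inter> (Y \<inter> C)" by auto
  ultimately show "r (X \<union> Y) + int (card ((X \<union> Y) \<inter> C)) + (r (X \<inter> Y) + int (card (X \<inter> Y \<inter> C)))
         \<le> r X + int (card (X \<inter> C)) + (r Y + int (card (Y \<inter> C)))"
    using card_Un_Int_int[OF fin] by simp
qed

lemma sum_if_card:
  assumes "finite A"
  shows "(\<Sum>x\<in>A. if P x then 1 else 0 :: int) = int (card {x\<in>A. P x})"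
  using assms by (simp add: sum.If_cases Int_def conj_commute)

lemma Dk_add:
  assumes "in_Dk k E \<sigma>" "finite E" "\<forall>e\<in>E. \<sigma> {e} + int m \<le> int k"
  shows "in_Dk k E (\<lambda>X. \<sigma> X + int m * int (card X))"
proof -
  obtain r where r: "\<forall>l<k. matroid_rank E (r l)" "\<forall>X. X \<subseteq> E \<longrightarrow> \<sigma> X = (\<Sum>l<k. r l X)"
    using assms(1) unfolding in_Dk_def by blast
  define S where "S e = {l. l < k \<and> r l {e} = 0}" for e
  have cardS: "m \<le> card (S e)" if e: "e \<in> E" for e
  proof -
    have r01: "r l {e} + (if l \<in> S e then 1 else 0) = 1" if "l < k" for l
    proof -
      have ee: "{e} \<subseteq> E" using e by auto
      have "0 \<le> r l {e} \<and> r l {e} \<le> int (card {e})" using mr_nonneg[OF _ ee] mr_card[OF _ ee] r(1) that by blast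
      then have "0 \<le> r l {e}" "r l {e} \<le> 1" by auto
      then show ?thesis unfolding S_def using that by auto
    qed
    have "\<sigma> {e} = (\<Sum>l<k. r l {e})" using r(2) e by auto
    moreover have "(\<Sum>l<k. r l {e}) + (\<Sum>l<k. if l \<in> S e then 1 else 0) = (\<Sum>l<k. 1::int)"
      unfolding sum.distrib[symmetric] using r01 by (intro sum.cong) auto
    moreover have "(\<Sum>l<k. if l \<in> S e then 1 else 0::int) = int (card {l\<in>{..<k}. l \<in> S e})"
      by (rule sum_if_card) simp
    moreover have "{l\<in>{..<k}. l \<in> S e} = S e" unfolding S_def by auto
    ultimately have "\<sigma> {e} + int (card (S e)) = int k" by simp
    moreover have "\<sigma> {e} + int m \<le> int k" using assms(3) e by blast
    ultimately show ?thesis by linarith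
  qed
  have "\<forall>e\<in>E. \<exists>T. T \<subseteq> S e \<and> card T = m"
    using cardS by (meson obtain_subset_with_card_n)
  then obtain T where T: "\<forall>e\<in>E. T e \<subseteq> S e \<and> card (T e) = m" by metis
  define C where "C l = {e\<in>E. l \<in> T e}" for l
  show ?thesis
  proof (rule in_Dk_intro[where r = "\<lambda>l X. r l X + int (card (X \<inter> C l))"])
    show "\<forall>l<k. matroid_rank E (\<lambda>X. r l X + int (card (X \<inter> C l)))"
    proof (intro allI impI)
      fix l assume l: "l < k"
      show "matroid_rank E (\<lambda>X. r l X + int (card (X \<inter> C l)))"
      proof (rule matroid_add_coloops)
        show "matroid_rank E (r l)" using r(1) l by blast
        show "finite E" by (rule assms(2))
        show "C l \<subseteq> E" unfolding C_def by auto
        show "\<forall>c\<in>C l. r l {c} = 0" unfolding C_def using T unfolding S_def by auto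
      qed
    qed
    show "\<forall>X. X \<subseteq> E \<longrightarrow> \<sigma> X + int m * int (card X) = (\<Sum>l<k. r l X + int (card (X \<inter> C l)))"
    proof (intro allI impI)
      fix X assume X: "X \<subseteq> E"
      have fX: "finite X" using X assms(2) finite_subset by auto
      have "(\<Sum>l<k. int (card (X \<inter> C l))) = (\<Sum>l<k. \<Sum>e\<in>X. if l \<in> T e then 1 else 0)"
      proof (intro sum.cong refl)
        fix l assume "l \<in> {..<k}"
        have "X \<inter> C l = {e\<in>X. l \<in> T e}" unfolding C_def using X by auto
        then show "int (card (X \<inter> C l)) = (\<Sum>e\<in>X. if l \<in> T e then 1 else 0)"
          using sum_if_card[OF fX] by simp
      qed
      also have "\<dots> = (\<Sum>e\<in>X. \<Sum>l<k. if l \<in> T e then 1 else 0)" by (rule sum.swap)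
      also have "\<dots> = (\<Sum>e\<in>X. int m)"
      proof (intro sum.cong refl)
        fix e assume e: "e \<in> X"
        have "(\<Sum>l<k. if l \<in> T e then 1 else 0::int) = int (card {l\<in>{..<k}. l \<in> T e})"
          by (rule sum_if_card) simp
        moreover have "{l\<in>{..<k}. l \<in> T e} = T e" using T e X unfolding S_def by auto
        ultimately show "(\<Sum>l<k. if l \<in> T e then 1 else 0::int) = int m" using T e X by auto
      qed
      finally have "(\<Sum>l<k. int (card (X \<inter> C l))) = int m * int (card X)" by simp
      then show "\<sigma> X + int m * int (card X) = (\<Sum>l<k. r l X + int (card (X \<inter> C l)))"
        using r(2) X by (simp add: sum.distrib)
    qed
  qed
qed


lemma jdual_shift:
  assumes "finite E" "X \<subseteq> E" "m \<le> j"
  shows "jdual j E (\<lambda>X. \<sigma> X + int m * int (card X)) X = jdual (j - m) E \<sigma> X"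
proof -
  have "card (E - X) = card E - card X" using assms by (meson card_Diff_subset finite_subset)
  moreover have "card X \<le> card E" using assms by (simp add: card_mono)
  ultimately have c: "int (card (E - X)) = int (card E) - int (card X)" by simp
  show ?thesis unfolding jdual_def c using assms(3) by (simp add: algebra_simps)
qed

lemma jdual_invol:
  assumes "finite E" "X \<subseteq> E" "\<sigma> {} = 0"
  shows "jdual j E (jdual j E \<sigma>) X = \<sigma> X"
proof -
  have "card (E - X) = card E - card X" using assms by (meson card_Diff_subset finite_subset)
  moreover have "card X \<le> card E" using assms by (simp add: card_mono)
  ultimately have c: "int (card (E - X)) = int (card E) - int (card X)" by simp
  have "E - (E - X) = X" using assms by auto
  then show ?thesis unfolding jdual_def c using assms(3) by (simp add: algebra_simps)
qed

lemma Dk_jdual: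
  assumes "in_Dk k F \<sigma>" "finite F" "\<forall>e\<in>F. \<sigma> {e} \<le> int j" "j \<le> k"
  shows "in_Dk k F (jdual j F \<sigma>)"
proof -
  have "in_Dk k F (\<lambda>X. \<sigma> X + int (k - j) * int (card X))"
    using assms by (intro Dk_add) auto
  then have "in_Dk k F (jdual k F (\<lambda>X. \<sigma> X + int (k - j) * int (card X)))"
    using Dk_kdual assms(2) by blast
  moreover have "\<forall>X. X \<subseteq> F \<longrightarrow> jdual k F (\<lambda>X. \<sigma> X + int (k - j) * int (card X)) X = jdual j F \<sigma> X"
    using jdual_shift[OF assms(2), of _ "k - j" k \<sigma>] assms(4) by auto
  ultimately show ?thesis by (rule in_Dk_cong)
qed

lemma pm_bound:
  assumes "polymatroid E \<rho>" "\<forall>e\<in>E. \<rho> {e} \<le> int i" "finite W" "W \<subseteq> E" "Z \<subseteq> E"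
  shows "\<rho> (Z \<union> W) \<le> \<rho> Z + int i * int (card W)"
  using assms(3,4)
proof (induction W rule: finite_induct)
  case empty then show ?case by simp
next
  case (insert w W)
  have sub: "Z \<union> W \<subseteq> E" "{w} \<subseteq> E" using insert assms by auto
  have "\<rho> ((Z \<union> W) \<union> {w}) + \<rho> ((Z \<union> W) \<inter> {w}) \<le> \<rho> (Z \<union> W) + \<rho> {w}"
    using pm_sub[OF assms(1) sub] .
  moreover have "(Z \<union> W) \<inter> {w} \<subseteq> E" using sub by auto
  then have "\<rho> {} \<le> \<rho> ((Z \<union> W) \<inter> {w})" "\<rho> {} = 0" using pm_nonneg[OF assms(1)] pm_empty[OF assms(1)] by auto
  moreover have "\<rho> {w} \<le> int i" using insert assms by auto
  moreover have "Z \<union> insert w W = (Z \<union> W) \<union> {w}" by auto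
  ultimately show ?case using insert by (simp add: algebra_simps)
qed

lemma pm_jdual:
  assumes "polymatroid E \<rho>" "\<forall>e\<in>E. \<rho> {e} \<le> int j" "finite E"
  shows "polymatroid E (jdual j E \<rho>)"
  unfolding polymatroid_def
proof (intro conjI allI impI)
  show "jdual j E \<rho> {} = 0" unfolding jdual_def by simp
next
  fix X Y assume XY: "X \<subseteq> Y \<and> Y \<subseteq> E"
  have "\<rho> ((E - Y) \<union> (Y - X)) \<le> \<rho> (E - Y) + int j * int (card (Y - X))"
    using assms XY by (intro pm_bound) (auto intro: finite_subset)
  moreover have "(E - Y) \<union> (Y - X) = E - X" using XY by auto
  moreover have "card (Y - X) = card Y - card X" using XY assms(3) by (meson card_Diff_subset finite_subset)
  moreover have "card X \<le> card Y" using XY assms(3) by (meson card_mono finite_subset)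
  ultimately show "jdual j E \<rho> X \<le> jdual j E \<rho> Y" unfolding jdual_def by (simp add: algebra_simps)
next
  fix X Y assume XY: "X \<subseteq> E \<and> Y \<subseteq> E"
  have fin: "finite X" "finite Y" using XY assms(3) finite_subset by auto
  have "\<rho> ((E - X) \<union> (E - Y)) + \<rho> ((E - X) \<inter> (E - Y)) \<le> \<rho> (E - X) + \<rho> (E - Y)"
    using pm_sub[OF assms(1), of "E - X" "E - Y"] by auto
  moreover have "(E - X) \<union> (E - Y) = E - (X \<inter> Y)" "(E - X) \<inter> (E - Y) = E - (X \<union> Y)" by auto
  moreover have "int j * int (card (X \<union> Y)) + int j * int (card (X \<inter> Y)) = int j * int (card X) + int j * int (card Y)"
    using card_Un_Int_int[OF fin] by (metis distrib_left)
  ultimately show "jdual j E \<rho> (X \<union> Y) + jdual j E \<rho> (X \<inter> Y) \<le> jdual j E \<rho> X + jdual j E \<rho> Y"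
    unfolding jdual_def by simp
qed

lemma pm_shift:
  assumes "polymatroid E \<rho>" "finite E" "0 \<le> c"
  shows "polymatroid E (\<lambda>X. \<rho> X + c * int (card X))"
  unfolding polymatroid_def
proof (intro conjI allI impI)
  show "\<rho> {} + c * int (card {}) = 0" using pm_empty[OF assms(1)] by simp
next
  fix X Y assume XY: "X \<subseteq> Y \<and> Y \<subseteq> E"
  have "card X \<le> card Y" using XY assms(2) by (meson card_mono finite_subset)
  then have "c * int (card X) \<le> c * int (card Y)" using assms(3) by (simp add: mult_left_mono)
  moreover have "\<rho> X \<le> \<rho> Y" using pm_mono[OF assms(1)] pm_sub[OF assms(1)] XY by auto
  ultimately show "\<rho> X + c * int (card X) \<le> \<rho> Y + c * int (card Y)" by simp
next
  fix X Y assume XY: "X \<subseteq> E \<and> Y \<subseteq> E"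
  have fin: "finite X" "finite Y" using XY assms(2) finite_subset by auto
  have "\<rho> (X \<union> Y) + \<rho> (X \<inter> Y) \<le> \<rho> X + \<rho> Y" using pm_mono[OF assms(1)] pm_sub[OF assms(1)] XY by auto
  moreover have "c * int (card (X \<union> Y)) + c * int (card (X \<inter> Y)) = c * int (card X) + c * int (card Y)"
    using card_Un_Int_int[OF fin] by (metis distrib_left)
  ultimately show "\<rho> (X \<union> Y) + c * int (card (X \<union> Y)) + (\<rho> (X \<inter> Y) + c * int (card (X \<inter> Y)))
         \<le> \<rho> X + c * int (card X) + (\<rho> Y + c * int (card Y))" by linarith
qed

lemma pm_minor_single:
  assumes "polymatroid E \<rho>" "B \<subseteq> E" "e \<in> E"
  shows "\<rho> ({e} \<union> B) - \<rho> B \<le> \<rho> {e}"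
proof -
  have "\<rho> ({e} \<union> B) + \<rho> ({e} \<inter> B) \<le> \<rho> {e} + \<rho> B" using pm_sub[OF assms(1), of "{e}" B] assms by auto
  moreover have "{e} \<inter> B \<subseteq> E" using assms by auto
  then have "\<rho> {} \<le> \<rho> ({e} \<inter> B)" "\<rho> {} = 0" using pm_nonneg[OF assms(1)] pm_empty[OF assms(1)] by auto
  ultimately show ?thesis by linarith
qed


theorem corollary4p2:
  fixes E :: "'a set" and \<rho> :: "'a set \<Rightarrow> int" and i k j :: nat
  assumes "finite E"
    and "0 < i" and "i \<le> k"
    and "ipolymatroid i E \<rho>"
    and "excluded_minor_Dk k E \<rho>"
    and "i \<le> j" and "j \<le> k"
  shows "excluded_minor_Dk k E (jdual j E \<rho>)
       \<and> excluded_minor_Dk k E (\<lambda>X. \<rho> X + (int j - int i) * int (card X))"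
proof -
  have pm: "polymatroid E \<rho>" and sing: "\<forall>e\<in>E. \<rho> {e} \<le> int i"
    using assms(4) unfolding ipolymatroid_def by auto
  have notD: "\<not> in_Dk k E \<rho>"
    and minors: "\<forall>A B. A \<subseteq> E \<and> B \<subseteq> E \<and> A \<inter> B = {} \<and> A \<union> B \<noteq> {} \<longrightarrow>
        in_Dk k (E - A - B) (pcontract (pdelete \<rho> A) B)"
    using assms(5) unfolding excluded_minor_Dk_def by auto
  have rho0: "\<rho> {} = 0" using pm_empty[OF pm] .
  have singj: "\<forall>e\<in>E. \<rho> {e} \<le> int j" using sing assms(6) by force
  have dsing: "jdual l E \<rho> {e} \<le> int l" if "e \<in> E" for l e
  proof -
    have "\<rho> (E - {e}) \<le> \<rho> E" using pm_mono[OF pm, of "E - {e}" E] by auto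
    then show ?thesis unfolding jdual_def by simp
  qed
  have P1: "excluded_minor_Dk k E (jdual j E \<rho>)"
    unfolding excluded_minor_Dk_def
  proof (intro conjI allI impI)
    show "polymatroid E (jdual j E \<rho>)" using pm_jdual[OF pm singj assms(1)] .
    show "\<not> in_Dk k E (jdual j E \<rho>)"
    proof
      assume D: "in_Dk k E (jdual j E \<rho>)"
      have "in_Dk k E (jdual j E (jdual j E \<rho>))"
        using Dk_jdual[OF D assms(1)] assms(7) dsing by blast
      moreover have "\<forall>X. X \<subseteq> E \<longrightarrow> jdual j E (jdual j E \<rho>) X = \<rho> X"
        using jdual_invol[of E _ \<rho> j] assms(1) rho0 by blast
      ultimately have "in_Dk k E \<rho>" by (rule in_Dk_cong)
      then show False using notD by blast
    qed
    fix A B assume AB: "A \<subseteq> E \<and> B \<subseteq> E \<and> A \<inter> B = {} \<and> A \<union> B \<noteq> {}"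
    define F where "F = E - A - B"
    have finF: "finite F" using assms(1) F_def by auto
    have "B \<subseteq> E \<and> A \<subseteq> E \<and> B \<inter> A = {} \<and> B \<union> A \<noteq> {}" using AB by auto
    then have "in_Dk k (E - B - A) (pcontract (pdelete \<rho> B) A)" using minors by blast
    moreover have "E - B - A = F" unfolding F_def by auto
    ultimately have M: "in_Dk k F (pcontract (pdelete \<rho> B) A)" by simp
    have Ms: "\<forall>e\<in>F. pcontract (pdelete \<rho> B) A {e} \<le> int j"
    proof
      fix e assume "e \<in> F"
      then have e: "e \<in> E" unfolding F_def by auto
      then have "\<rho> ({e} \<union> A) - \<rho> A \<le> \<rho> {e}" using pm_minor_single[OF pm] AB by blast
      then show "pcontract (pdelete \<rho> B) A {e} \<le> int j"
        using singj e unfolding pcontract_def pdelete_def by fastforce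
    qed
    have "in_Dk k F (jdual j F (pcontract (pdelete \<rho> B) A))"
      using Dk_jdual[OF M finF Ms assms(7)] .
    moreover have "\<forall>X. X \<subseteq> F \<longrightarrow> jdual j F (pcontract (pdelete \<rho> B) A) X
                    = pcontract (pdelete (jdual j E \<rho>) A) B X"
    proof (intro allI impI)
      fix X assume X: "X \<subseteq> F"
      have fX: "finite X" "finite B" using X finF AB assms(1) finite_subset by auto
      have dis: "X \<inter> B = {}" using X F_def by auto
      have e1: "F \<union> A = E - B" "(F - X) \<union> A = E - (X \<union> B)" using AB X unfolding F_def by auto
      have c: "card (X \<union> B) = card X + card B" using card_Un_disjoint[OF fX dis] .
      show "jdual j F (pcontract (pdelete \<rho> B) A) X = pcontract (pdelete (jdual j E \<rho>) A) B X"
        unfolding jdual_def pcontract_def pdelete_def e1 c by (simp add: algebra_simps)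
    qed
    ultimately have "in_Dk k F (pcontract (pdelete (jdual j E \<rho>) A) B)" by (rule in_Dk_cong)
    then show "in_Dk k (E - A - B) (pcontract (pdelete (jdual j E \<rho>) A) B)" by (simp add: F_def)
  qed
  have ji: "int j - int i = int (j - i)" using assms(6) by simp
  have P2: "excluded_minor_Dk k E (\<lambda>X. \<rho> X + int (j - i) * int (card X))"
    unfolding excluded_minor_Dk_def
  proof (intro conjI allI impI)
    show "polymatroid E (\<lambda>X. \<rho> X + int (j - i) * int (card X))" using pm_shift[OF pm assms(1)] by simp
    show "\<not> in_Dk k E (\<lambda>X. \<rho> X + int (j - i) * int (card X))"
    proof
      assume D: "in_Dk k E (\<lambda>X. \<rho> X + int (j - i) * int (card X))"
      have "\<forall>e\<in>E. \<rho> {e} + int (j - i) * int (card {e}) \<le> int j" using sing assms(6) by auto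
      then have "in_Dk k E (jdual j E (\<lambda>X. \<rho> X + int (j - i) * int (card X)))"
        using Dk_jdual[OF D assms(1)] assms(7) by blast
      moreover have "\<forall>X. X \<subseteq> E \<longrightarrow> jdual j E (\<lambda>X. \<rho> X + int (j - i) * int (card X)) X = jdual i E \<rho> X"
        using jdual_shift[OF assms(1), of _ "j - i" j \<rho>] assms(6) by auto
      ultimately have D2: "in_Dk k E (jdual i E \<rho>)" by (rule in_Dk_cong)
      have "in_Dk k E (jdual i E (jdual i E \<rho>))"
        using Dk_jdual[OF D2 assms(1)] assms(3) dsing by blast
      moreover have "\<forall>X. X \<subseteq> E \<longrightarrow> jdual i E (jdual i E \<rho>) X = \<rho> X"
        using jdual_invol[of E _ \<rho> i] assms(1) rho0 by blast
      ultimately have "in_Dk k E \<rho>" by (rule in_Dk_cong)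
      then show False using notD by blast
    qed
    fix A B assume AB: "A \<subseteq> E \<and> B \<subseteq> E \<and> A \<inter> B = {} \<and> A \<union> B \<noteq> {}"
    have M: "in_Dk k (E - A - B) (pcontract (pdelete \<rho> A) B)" using minors AB by blast
    have Ms: "\<forall>e\<in>E - A - B. pcontract (pdelete \<rho> A) B {e} + int (j - i) \<le> int k"
    proof
      fix e assume "e \<in> E - A - B"
      then have e: "e \<in> E" by auto
      then have "\<rho> ({e} \<union> B) - \<rho> B \<le> \<rho> {e}" using pm_minor_single[OF pm] AB by blast
      then show "pcontract (pdelete \<rho> A) B {e} + int (j - i) \<le> int k"
        using sing e assms(6,7) unfolding pcontract_def pdelete_def by fastforce
    qed
    have "in_Dk k (E - A - B) (\<lambda>X. pcontract (pdelete \<rho> A) B X + int (j - i) * int (card X))"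
      using Dk_add[OF M _ Ms] assms(1) by blast
    moreover have "\<forall>X. X \<subseteq> E - A - B \<longrightarrow> pcontract (pdelete \<rho> A) B X + int (j - i) * int (card X)
       = pcontract (pdelete (\<lambda>X. \<rho> X + int (j - i) * int (card X)) A) B X"
    proof (intro allI impI)
      fix X assume X: "X \<subseteq> E - A - B"
      have fX: "finite X" "finite B" using X AB assms(1) by (meson Diff_subset finite_subset order_trans)+
      have dis: "X \<inter> B = {}" using X by auto
      have c: "card (X \<union> B) = card X + card B" using card_Un_disjoint[OF fX dis] .
      show "pcontract (pdelete \<rho> A) B X + int (j - i) * int (card X)
       = pcontract (pdelete (\<lambda>X. \<rho> X + int (j - i) * int (card X)) A) B X"
        unfolding pcontract_def pdelete_def c by (simp add: algebra_simps)
    qed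
    ultimately show "in_Dk k (E - A - B) (pcontract (pdelete (\<lambda>X. \<rho> X + int (j - i) * int (card X)) A) B)"
      by (rule in_Dk_cong)
  qed
  show ?thesis unfolding ji using P1 P2 by blast
qed

end
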